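(* Consider a homogeneous linear Cauchy elastic body with elasticity matrix $C_{\alpha\beta}=c_{\alpha\beta}+b_{\alpha\beta}$ ($c$ symmetric, $b$ antisymmetric) undergoing a homogeneous displacement-controlled deformation in which, for fixed indices $\xi\neq\eta$ in $\{1,\dots,6\}$, the only nonzero Voigt strains are $$\epsilon_\xi(t)=\mathring\epsilon_\xi\sin\frac{\pi k_\xi t}{t_0},\qquad \epsilon_\eta(t)=\mathring\epsilon_\eta\sin\frac{\pi k_\eta t}{t_0},\qquad t\in[0,t_0],$$ where $\mathring\epsilon_\xi,\mathring\epsilon_\eta$ are constants and $k_\xi,k_\eta$ are positive integers with $k_\xi+k_\eta$ odd. This path $\Gamma_{\xi\eta}$ is closed in strain space, and the net stress-work density is $$w(\Gamma_{\xi\eta})=\frac{4k_\xi k_\eta\,\mathring\epsilon_\xi\mathring\epsilon_\eta}{k_\eta^2-k_\xi^2}\,b_{\xi\eta};$$ hence $b_{\xi\eta}=\dfrac{k_\eta^2-k_\xi^2}{4k_\xi k_\eta\mathring\epsilon_\xi\mathring\epsilon_\eta}\,w(\Gamma_{\xi\eta})$ whenever $\mathring\epsilon_\xi\mathring\epsilon_\eta\neq0$.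
   Context: Linear Cauchy elasticity: $\sigma_{ab}=\mathsf C_{abcd}\epsilon_{cd}$ with minor symmetries but not necessarily the major symmetry. In Voigt notation $(11,22,33,23,31,12)\leftrightarrow(1,\dots,6)$, $\sigma_\alpha=\sum_{\beta=1}^6C_{\alpha\beta}\epsilon_\beta$ with $C_{\alpha\beta}=c_{\alpha\beta}+b_{\alpha\beta}$, $c_{\alpha\beta}=c_{\beta\alpha}$, $b_{\alpha\beta}=-b_{\beta\alpha}$ (the antisymmetric elastic constants). For a homogeneous strain history $\epsilon_\alpha(t)$, $t\in[0,t_0]$, forming a closed path $\Gamma$ in strain space, the net stress-work density is $w(\Gamma)=\int_0^{t_0}\sum_{\alpha,\beta=1}^6C_{\alpha\beta}\,\epsilon_\beta(t)\,\dot\epsilon_\alpha(t)\,dt$. *)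

theory Defs
  imports "HOL-Analysis.Analysis"
begin

text \<open>Voigt indices are 1..6. A strain history is a function
  eps :: real => nat => real (time, Voigt index).\<close>

definition stress_work :: "(nat \<Rightarrow> nat \<Rightarrow> real) \<Rightarrow> (real \<Rightarrow> nat \<Rightarrow> real) \<Rightarrow> real \<Rightarrow> real" where
  "stress_work Cm eps t0 =
     integral {0..t0} (\<lambda>t. \<Sum>\<alpha>\<in>{1..6}. \<Sum>\<beta>\<in>{1..6}.
        Cm \<alpha> \<beta> * eps t \<beta> * deriv (\<lambda>s. eps s \<alpha>) t)"

definition sin_path :: "nat \<Rightarrow> nat \<Rightarrow> real \<Rightarrow> real \<Rightarrow> nat \<Rightarrow> nat \<Rightarrow> real \<Rightarrow> real \<Rightarrow> nat \<Rightarrow> real" where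
  "sin_path \<xi> \<eta> e\<xi> e\<eta> k\<xi> k\<eta> t0 t \<alpha> =
     (if \<alpha> = \<xi> then e\<xi> * sin (pi * real k\<xi> * t / t0)
      else if \<alpha> = \<eta> then e\<eta> * sin (pi * real k\<eta> * t / t0)
      else 0)"

end

theory Submission
  imports Defs
begin

lemma key_deriv:
  fixes A B :: real
  assumes D: "A^2 - B^2 \<noteq> 0"
  shows "((\<lambda>t. (2*A*B* cos(A*t)* cos(B*t) + (A^2+B^2)* sin(A*t)* sin(B*t))/(A^2-B^2))
     has_real_derivative (A* sin(B*t)* cos(A*t) - B* sin(A*t)* cos(B*t))) (at t)"
proof -
  have "((\<lambda>t. (2*A*B* cos(A*t)* cos(B*t) + (A^2+B^2)* sin(A*t)* sin(B*t))/(A^2-B^2))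
     has_real_derivative ((2*A*B*((-sin(A*t)*A)* cos(B*t) + cos(A*t)*(-sin(B*t)*B))
        + (A^2+B^2)*((cos(A*t)*A)* sin(B*t) + sin(A*t)*(cos(B*t)*B)))/(A^2-B^2))) (at t)"
    using D by (auto intro!: derivative_eq_intros) (simp add: algebra_simps)
  moreover have "((2*A*B*((-sin(A*t)*A)* cos(B*t) + cos(A*t)*(-sin(B*t)*B))
        + (A^2+B^2)*((cos(A*t)*A)* sin(B*t) + sin(A*t)*(cos(B*t)*B)))/(A^2-B^2))
      = A* sin(B*t)* cos(A*t) - B* sin(A*t)* cos(B*t)"
    using D by (simp add: field_simps power2_eq_square)
  ultimately show ?thesis by simp
qed

theorem mainTheorem8:
  fixes c b :: "nat \<Rightarrow> nat \<Rightarrow> real"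
    and \<xi> \<eta> k\<xi> k\<eta> :: nat
    and e\<xi> e\<eta> t0 :: real
  assumes c_sym: "\<And>\<alpha> \<beta>. c \<alpha> \<beta> = c \<beta> \<alpha>"
    and b_anti: "\<And>\<alpha> \<beta>. b \<alpha> \<beta> = - b \<beta> \<alpha>"
    and \<xi>: "\<xi> \<in> {1..6}" and \<eta>: "\<eta> \<in> {1..6}" and neq: "\<xi> \<noteq> \<eta>"
    and k\<xi>: "k\<xi> > 0" and k\<eta>: "k\<eta> > 0"
    and odd: "odd (k\<xi> + k\<eta>)"
    and t0: "t0 > 0"
  shows "sin_path \<xi> \<eta> e\<xi> e\<eta> k\<xi> k\<eta> t0 0 = sin_path \<xi> \<eta> e\<xi> e\<eta> k\<xi> k\<eta> t0 t0
    \<and> stress_work (\<lambda>\<alpha> \<beta>. c \<alpha> \<beta> + b \<alpha> \<beta>) (sin_path \<xi> \<eta> e\<xi> e\<eta> k\<xi> k\<eta> t0) t0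
        = 4 * real k\<xi> * real k\<eta> * e\<xi> * e\<eta> / ((real k\<eta>)\<^sup>2 - (real k\<xi>)\<^sup>2) * b \<xi> \<eta>
    \<and> (e\<xi> * e\<eta> \<noteq> 0 \<longrightarrow>
        b \<xi> \<eta> = ((real k\<eta>)\<^sup>2 - (real k\<xi>)\<^sup>2) / (4 * real k\<xi> * real k\<eta> * e\<xi> * e\<eta>)
          * stress_work (\<lambda>\<alpha> \<beta>. c \<alpha> \<beta> + b \<alpha> \<beta>) (sin_path \<xi> \<eta> e\<xi> e\<eta> k\<xi> k\<eta> t0) t0)"
proof -
  define A where "A = pi * real k\<xi> / t0"
  define B where "B = pi * real k\<eta> / t0"
  have rA: "\<And>t. pi * real k\<xi> * t / t0 = A * t" by (simp add: A_def)
  have rB: "\<And>t. pi * real k\<eta> * t / t0 = B * t" by (simp add: B_def)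
  have kne: "real k\<xi> \<noteq> real k\<eta>" using odd by auto
  have kne2: "(real k\<eta>)\<^sup>2 - (real k\<xi>)\<^sup>2 \<noteq> 0"
    using kne k\<xi> k\<eta> by (simp add: power2_eq_iff)
  have D: "A^2 - B^2 \<noteq> 0"
  proof
    assume "A^2 - B^2 = 0"
    hence "(pi/t0)^2 * ((real k\<xi>)\<^sup>2 - (real k\<eta>)\<^sup>2) = 0"
      by (simp add: A_def B_def power_mult_distrib power_divide algebra_simps)
    thus False using kne2 t0 by simp
  qed
  define P where "P = sin_path \<xi> \<eta> e\<xi> e\<eta> k\<xi> k\<eta> t0"
  have Pdef: "P t \<alpha> = (if \<alpha> = \<xi> then e\<xi> * sin (A * t)
      else if \<alpha> = \<eta> then e\<eta> * sin (B * t) else 0)" for t \<alpha>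
    by (simp add: P_def sin_path_def rA rB)
  have sAt0: "sin (A * t0) = 0"
    using t0 by (simp add: A_def sin_npi2)
  have sBt0: "sin (B * t0) = 0"
    using t0 by (simp add: B_def sin_npi2)
  have cAt0: "cos (A * t0) = (-1) ^ k\<xi>"
    using t0 by (simp add: A_def)
  have cBt0: "cos (B * t0) = (-1) ^ k\<eta>"
    using t0 by (simp add: B_def)
  have cc: "cos (A * t0) * cos (B * t0) = -1"
    using odd by (simp add: cAt0 cBt0 power_add[symmetric])
  have part1: "P 0 = P t0"
    by (rule ext) (simp add: Pdef sAt0 sBt0)
  define P' where "P' t \<alpha> = (if \<alpha> = \<xi> then e\<xi> * (cos (A * t) * A)
      else if \<alpha> = \<eta> then e\<eta> * (cos (B * t) * B) else 0)" for t \<alpha>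
  have dP: "deriv (\<lambda>s. P s \<alpha>) t = P' t \<alpha>" for t \<alpha>
  proof -
    have "((\<lambda>s. P s \<alpha>) has_real_derivative P' t \<alpha>) (at t)"
      unfolding Pdef P'_def
      by (auto intro!: derivative_eq_intros)
    thus ?thesis by (rule DERIV_imp_deriv)
  qed
  define C where "C \<alpha> \<beta> = c \<alpha> \<beta> + b \<alpha> \<beta>" for \<alpha> \<beta>
  define g where "g t = C \<xi> \<xi> * P t \<xi> * P' t \<xi> + C \<xi> \<eta> * P t \<eta> * P' t \<xi>
     + C \<eta> \<xi> * P t \<xi> * P' t \<eta> + C \<eta> \<eta> * P t \<eta> * P' t \<eta>" for t
  have sumeq: "(\<Sum>\<alpha>\<in>{1..6}. \<Sum>\<beta>\<in>{1..6}. C \<alpha> \<beta> * P t \<beta> * deriv (\<lambda>s. P s \<alpha>) t) = g t" for t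
  proof -
    have sub: "{\<xi>, \<eta>} \<subseteq> {1..6::nat}" using \<xi> \<eta> by auto
    have "(\<Sum>\<alpha>\<in>{1..6}. \<Sum>\<beta>\<in>{1..6}. C \<alpha> \<beta> * P t \<beta> * deriv (\<lambda>s. P s \<alpha>) t)
       = (\<Sum>\<alpha>\<in>{\<xi>,\<eta>}. \<Sum>\<beta>\<in>{1..6}. C \<alpha> \<beta> * P t \<beta> * P' t \<alpha>)"
      unfolding dP by (rule sum.mono_neutral_right) (use sub in \<open>auto simp: P'_def\<close>)
    also have "\<dots> = (\<Sum>\<alpha>\<in>{\<xi>,\<eta>}. \<Sum>\<beta>\<in>{\<xi>,\<eta>}. C \<alpha> \<beta> * P t \<beta> * P' t \<alpha>)"
      by (rule sum.cong[OF refl], rule sum.mono_neutral_right)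
         (use sub in \<open>auto simp: Pdef\<close>)
    also have "\<dots> = g t" using neq by (simp add: g_def algebra_simps)
    finally show ?thesis .
  qed
  define G where "G t = (2*A*B* cos(A*t)* cos(B*t) + (A^2+B^2)* sin(A*t)* sin(B*t))/(A^2-B^2)" for t
  define F where "F t = C \<xi> \<xi> / 2 * (P t \<xi>)^2 + C \<eta> \<eta> / 2 * (P t \<eta>)^2
     + c \<xi> \<eta> * P t \<xi> * P t \<eta> + b \<xi> \<eta> * e\<xi> * e\<eta> * G t" for t
  have bxx: "b \<xi> \<xi> = 0" "b \<eta> \<eta> = 0" using b_anti by (metis add.inverse_inverse neg_equal_zero)+
  have Gd: "(G has_real_derivative (A* sin(B*t)* cos(A*t) - B* sin(A*t)* cos(B*t))) (at t)" for t
    unfolding G_def by (rule key_deriv[OF D])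
  have Fd: "(F has_real_derivative g t) (at t)" for t
  proof -
    have "(F has_real_derivative
       (C \<xi> \<xi> / 2 * (2 * (e\<xi> * sin (A*t)) * (e\<xi> * (cos (A*t) * A)))
       + C \<eta> \<eta> / 2 * (2 * (e\<eta> * sin (B*t)) * (e\<eta> * (cos (B*t) * B)))
       + c \<xi> \<eta> * ((e\<xi> * (cos (A*t) * A)) * (e\<eta> * sin (B*t)) + (e\<xi> * sin (A*t)) * (e\<eta> * (cos (B*t) * B)))
       + b \<xi> \<eta> * e\<xi> * e\<eta> * (A* sin(B*t)* cos(A*t) - B* sin(A*t)* cos(B*t)))) (at t)"
      unfolding F_def Pdef using neq
      by (auto intro!: derivative_eq_intros Gd simp: power2_eq_square) (simp add: algebra_simps)
    moreover have "(C \<xi> \<xi> / 2 * (2 * (e\<xi> * sin (A*t)) * (e\<xi> * (cos (A*t) * A)))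
       + C \<eta> \<eta> / 2 * (2 * (e\<eta> * sin (B*t)) * (e\<eta> * (cos (B*t) * B)))
       + c \<xi> \<eta> * ((e\<xi> * (cos (A*t) * A)) * (e\<eta> * sin (B*t)) + (e\<xi> * sin (A*t)) * (e\<eta> * (cos (B*t) * B)))
       + b \<xi> \<eta> * e\<xi> * e\<eta> * (A* sin(B*t)* cos(A*t) - B* sin(A*t)* cos(B*t))) = g t"
      unfolding g_def Pdef P'_def C_def using neq b_anti[of \<eta> \<xi>] c_sym[of \<eta> \<xi>]
      by (simp add: algebra_simps add_divide_distrib)
    ultimately show ?thesis by simp
  qed
  have hi: "(g has_integral (F t0 - F 0)) {0..t0}"
    using t0 Fd
    by (intro fundamental_theorem_of_calculus)
       (auto simp: has_real_derivative_iff_has_vector_derivative[symmetric]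
             intro: has_field_derivative_at_within)
  have F0: "F t0 - F 0 = b \<xi> \<eta> * e\<xi> * e\<eta> * (G t0 - G 0)"
    unfolding F_def Pdef by (simp add: sAt0 sBt0 algebra_simps)
  have G0: "G t0 - G 0 = -4*A*B/(A^2-B^2)"
  proof -
    have "G t0 = (2*A*B*(cos (A * t0) * cos (B * t0)))/(A^2-B^2)"
      unfolding G_def by (simp add: sAt0 sBt0 mult.assoc)
    also have "\<dots> = (-2*A*B)/(A^2-B^2)" by (simp add: cc)
    finally have "G t0 = (-2*A*B)/(A^2-B^2)" .
    moreover have "G 0 = (2*A*B)/(A^2-B^2)" unfolding G_def by simp
    ultimately show ?thesis by (simp add: diff_divide_distrib[symmetric])
  qed
  have AB: "-4*A*B/(A^2-B^2) = 4 * real k\<xi> * real k\<eta> / ((real k\<eta>)\<^sup>2 - (real k\<xi>)\<^sup>2)"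
    using t0 kne2 by (simp add: A_def B_def field_simps power2_eq_square)
  have sw: "stress_work C P t0 = 4 * real k\<xi> * real k\<eta> * e\<xi> * e\<eta> / ((real k\<eta>)\<^sup>2 - (real k\<xi>)\<^sup>2) * b \<xi> \<eta>"
  proof -
    have "stress_work C P t0 = integral {0..t0} g"
      unfolding stress_work_def sumeq ..
    also have "\<dots> = F t0 - F 0" using hi by (rule integral_unique)
    also have "\<dots> = 4 * real k\<xi> * real k\<eta> * e\<xi> * e\<eta> / ((real k\<eta>)\<^sup>2 - (real k\<xi>)\<^sup>2) * b \<xi> \<eta>"
      unfolding F0 G0 AB by simp
    finally show ?thesis .
  qed
  have C_eq: "(\<lambda>\<alpha> \<beta>. c \<alpha> \<beta> + b \<alpha> \<beta>) = C" by (simp add: C_def fun_eq_iff)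
  show ?thesis
    unfolding C_eq P_def[symmetric] sw
    using part1 kne2 k\<xi> k\<eta> by (auto simp: field_simps)
qed

end
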